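(* Let $\mathbb{G}$ be a finite set of labeled temporal graphs with common label alphabet $\Sigma$, each having at least one temporal wedge and none having a vertex with two incident temporal edges of equal time stamp. Let $W$ be the number of non-equivalent labeled temporal wedges, let $\lambda\in\mathbb{R}_{>0}$ and $\delta\in(0,1)$, and set $s=\left\lceil\frac{\log(2\cdot|\mathbb{G}|\cdot W/\delta)}{2(\lambda/W)^2}\right\rceil$. Run the sampling algorithm below independently with sample size $s$ on every $\mathcal{G}\in\mathbb{G}$, producing vectors $\widetilde{\phi}_{\mathrm{TG}}(\mathcal{G})$. Then, with probability at least $1-\delta$, $$\sup_{\mathcal{G}_1,\mathcal{G}_2\in\mathbb{G}}\left|k_{\mathrm{TG}}(\mathcal{G}_1,\mathcal{G}_2)-\langle\widetilde{\phi}_{\mathrm{TG}}(\mathcal{G}_1),\widetilde{\phi}_{\mathrm{TG}}(\mathcal{G}_2)\rangle\right|\le 3\lambda.$$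
   Context: A labeled temporal graph $\mathcal{G}=(V,\mathcal{E},l)$ has a finite node set $V$, a finite set $\mathcal{E}$ of directed temporal edges $(u,v,t)$ with $u\ne v\in V$, $t\in\mathbb{N}$, and a labeling $l\colon V\times\mathbb{N}\to\Sigma$. The degree $d(v)$ is the number of temporal edges incident to $v$ (incoming or outgoing). A temporal wedge centered at $v$ is an unordered pair $\{e,f\}$ of distinct temporal edges both incident to $v$; written in chronological order it is a sequence $g=((u_1,v_1,t_1),(u_2,v_2,t_2))$ with $t_1<t_2$. Its label is $l(g)=(l(u_1,t_1),l(v_1,t_1+1),l(u_2,t_2),l(v_2,t_2+1))$. Two such sequences $g=((u_i,v_i,t_i))_{i=1,2}$ and $g'=((u'_i,v'_i,t'_i))_{i=1,2}$ are equivalent if there is a bijection $\psi$ from the nodes of $g$ to those of $g'$ with $\psi(u_i)=u'_i$, $\psi(v_i)=v'_i$ for $i=1,2$, and $l(g)=l(g')$ (actual time stamps are ignored, only their order matters); $W$ is the number of equivalence classes (labeled wedge types). The total number of temporal wedges of $\mathcal{G}$ is $w=\sum_{v\in V}\binom{d(v)}{2}$. The normalized wedge feature vector $\phi_{\mathrm{TG}}(\mathcal{G})$ has one component per type $\tau$, equal to (number of temporal wedges of $\mathcal{G}$ of type $\tau$)$/w$, and the (normalized temporal graphlet wedge) kernel is $k_{\mathrm{TG}}(\mathcal{G}_1,\mathcal{G}_2)=\langle\phi_{\mathrm{TG}}(\mathcal{G}_1),\phi_{\mathrm{TG}}(\mathcal{G}_2)\rangle$. Sampling algorithm with sample size $s$: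 initialize $\widetilde{\phi}_{\mathrm{TG}}(\mathcal{G})$ to the zero vector; repeat $s$ times independently: sample a vertex $v$ with probability $p_v=\binom{d(v)}{2}/w$, then sample a pair $\{e,f\}$ of distinct edges incident to $v$ uniformly at random, let $\tau$ be the type of the temporal wedge $\{e,f\}$, and increase $\widetilde{\phi}_{\mathrm{TG}}(\mathcal{G})_\tau$ by $1/s$; output $\widetilde{\phi}_{\mathrm{TG}}(\mathcal{G})$. *)

theory Defs
  imports "HOL-Probability.Probability"
begin

type_synonym ('v, 'l) tgraph = "'v set \<times> ('v \<times> 'v \<times> nat) set \<times> ('v \<Rightarrow> nat \<Rightarrow> 'l)"

definition tg_nodes :: "('v, 'l) tgraph \<Rightarrow> 'v set" where
  "tg_nodes G = fst G"

definition tg_edges :: "('v, 'l) tgraph \<Rightarrow> ('v \<times> 'v \<times> nat) set" where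
  "tg_edges G = fst (snd G)"

definition tg_label :: "('v, 'l) tgraph \<Rightarrow> 'v \<Rightarrow> nat \<Rightarrow> 'l" where
  "tg_label G = snd (snd G)"

definition edge_time :: "'v \<times> 'v \<times> nat \<Rightarrow> nat" where
  "edge_time e = snd (snd e)"

definition tgraph_wf :: "'l set \<Rightarrow> ('v, 'l) tgraph \<Rightarrow> bool" where
  "tgraph_wf Sig G \<longleftrightarrow> finite (tg_nodes G) \<and> finite (tg_edges G) \<and>
     (\<forall>(u, v, t) \<in> tg_edges G. u \<in> tg_nodes G \<and> v \<in> tg_nodes G \<and> u \<noteq> v) \<and>
     (\<forall>v \<in> tg_nodes G. \<forall>t. tg_label G v t \<in> Sig)"

definition incident :: "('v, 'l) tgraph \<Rightarrow> 'v \<Rightarrow> ('v \<times> 'v \<times> nat) set" where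
  "incident G v = {e \<in> tg_edges G. fst e = v \<or> fst (snd e) = v}"

definition tdeg :: "('v, 'l) tgraph \<Rightarrow> 'v \<Rightarrow> nat" where
  "tdeg G v = card (incident G v)"

definition wedges_at :: "('v, 'l) tgraph \<Rightarrow> 'v \<Rightarrow> ('v \<times> 'v \<times> nat) set set" where
  "wedges_at G v = {{e, f} | e f. e \<noteq> f \<and> e \<in> incident G v \<and> f \<in> incident G v}"

definition total_wedges :: "('v, 'l) tgraph \<Rightarrow> nat" where
  "total_wedges G = (\<Sum>v \<in> tg_nodes G. tdeg G v choose 2)"

definition distinct_times :: "('v, 'l) tgraph \<Rightarrow> bool" where
  "distinct_times G \<longleftrightarrow> (\<forall>v \<in> tg_nodes G. \<forall>e \<in> incident G v. \<forall>f \<in> incident G v.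
       e \<noteq> f \<longrightarrow> edge_time e \<noteq> edge_time f)"

definition chrono :: "('v \<times> 'v \<times> nat) set \<Rightarrow> ('v \<times> 'v \<times> nat) \<times> ('v \<times> 'v \<times> nat)" where
  "chrono P = (SOME (e, f). P = {e, f} \<and> edge_time e < edge_time f)"

definition chrono_wedge_seq :: "('v \<times> 'v \<times> nat) \<times> ('v \<times> 'v \<times> nat) \<Rightarrow> bool" where
  "chrono_wedge_seq g = (case g of ((u1, v1, t1), (u2, v2, t2)) \<Rightarrow>
     u1 \<noteq> v1 \<and> u2 \<noteq> v2 \<and> t1 < t2 \<and> {u1, v1} \<inter> {u2, v2} \<noteq> {})"

text \<open>Node-identity pattern of a list of nodes: each node is replaced by the index of
  its first occurrence among the distinct nodes.  Two lists admit a bijection psi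
  mapping one onto the other positionwise iff their patterns coincide.\<close>
definition node_pattern :: "'v list \<Rightarrow> nat list" where
  "node_pattern xs = map (\<lambda>x. length (takeWhile (\<lambda>y. y \<noteq> x) (remdups xs))) xs"

text \<open>Canonical invariant of the equivalence class (labeled wedge type) of a
  chronological wedge sequence g under labeling l: node pattern and label l(g).\<close>
definition wedge_key :: "('v \<Rightarrow> nat \<Rightarrow> 'l) \<Rightarrow> ('v \<times> 'v \<times> nat) \<times> ('v \<times> 'v \<times> nat)
    \<Rightarrow> nat list \<times> 'l list" where
  "wedge_key l g = (case g of ((u1, v1, t1), (u2, v2, t2)) \<Rightarrow>
     (node_pattern [u1, v1, u2, v2], [l u1 t1, l v1 (t1 + 1), l u2 t2, l v2 (t2 + 1)]))"

definition wedge_types :: "'l set \<Rightarrow> (nat list \<times> 'l list) set" where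
  "wedge_types Sig = {wedge_key l g | (l :: nat \<Rightarrow> nat \<Rightarrow> 'l) g.
      (\<forall>x t. l x t \<in> Sig) \<and> chrono_wedge_seq g}"

definition num_types :: "'l set \<Rightarrow> nat" where
  "num_types Sig = card (wedge_types Sig)"

definition wtype :: "('v, 'l) tgraph \<Rightarrow> ('v \<times> 'v \<times> nat) set \<Rightarrow> nat list \<times> 'l list" where
  "wtype G P = wedge_key (tg_label G) (chrono P)"

definition type_count :: "('v, 'l) tgraph \<Rightarrow> nat list \<times> 'l list \<Rightarrow> nat" where
  "type_count G \<tau> = card {(v, P). v \<in> tg_nodes G \<and> P \<in> wedges_at G v \<and> wtype G P = \<tau>}"

definition phi_TG :: "('v, 'l) tgraph \<Rightarrow> nat list \<times> 'l list \<Rightarrow> real" where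
  "phi_TG G \<tau> = real (type_count G \<tau>) / real (total_wedges G)"

definition inner_types :: "'l set \<Rightarrow> (nat list \<times> 'l list \<Rightarrow> real) \<Rightarrow> (nat list \<times> 'l list \<Rightarrow> real) \<Rightarrow> real" where
  "inner_types Sig x y = (\<Sum>\<tau> \<in> wedge_types Sig. x \<tau> * y \<tau>)"

definition k_TG :: "'l set \<Rightarrow> ('v, 'l) tgraph \<Rightarrow> ('v, 'l) tgraph \<Rightarrow> real" where
  "k_TG Sig G1 G2 = inner_types Sig (phi_TG G1) (phi_TG G2)"

definition vertex_pmf :: "('v, 'l) tgraph \<Rightarrow> 'v pmf" where
  "vertex_pmf G = embed_pmf (\<lambda>v. if v \<in> tg_nodes G
      then real (tdeg G v choose 2) / real (total_wedges G) else 0)"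

definition sample_type :: "('v, 'l) tgraph \<Rightarrow> (nat list \<times> 'l list) pmf" where
  "sample_type G = do {
     v \<leftarrow> vertex_pmf G;
     P \<leftarrow> pmf_of_set (wedges_at G v);
     return_pmf (wtype G P) }"

definition estimate_pmf :: "('v, 'l) tgraph \<Rightarrow> nat \<Rightarrow> (nat list \<times> 'l list \<Rightarrow> real) pmf" where
  "estimate_pmf G s = map_pmf (\<lambda>X \<tau>. real (card {i \<in> {..<s}. X i = \<tau>}) / real s)
      (Pi_pmf {..<s} undefined (\<lambda>_. sample_type G))"

definition joint_estimate_pmf :: "('v, 'l) tgraph set \<Rightarrow> nat
    \<Rightarrow> (('v, 'l) tgraph \<Rightarrow> nat list \<times> 'l list \<Rightarrow> real) pmf" where
  "joint_estimate_pmf GG s = Pi_pmf GG (\<lambda>_. 0) (\<lambda>G. estimate_pmf G s)"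

end

theory Submission
  imports Defs
begin


lemma wedges_at_eq: "wedges_at G v = {B. B \<subseteq> incident G v \<and> card B = 2}"
proof (intro set_eqI iffI)
  fix x assume "x \<in> wedges_at G v"
  then obtain e f where "x = {e, f}" "e \<noteq> f" "e \<in> incident G v" "f \<in> incident G v"
    unfolding wedges_at_def by blast
  then show "x \<in> {B. B \<subseteq> incident G v \<and> card B = 2}" by auto
next
  fix x assume "x \<in> {B. B \<subseteq> incident G v \<and> card B = 2}"
  then have "x \<subseteq> incident G v" "card x = 2" by auto
  then obtain e f where "x = {e, f}" "e \<noteq> f" by (meson card_2_iff)
  then show "x \<in> wedges_at G v" unfolding wedges_at_def using \<open>x \<subseteq> incident G v\<close> by blast
qed

lemma finite_incident: "tgraph_wf Sig G \<Longrightarrow> finite (incident G v)"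
  unfolding tgraph_wf_def incident_def by auto

lemma card_wedges_at: "tgraph_wf Sig G \<Longrightarrow> card (wedges_at G v) = tdeg G v choose 2"
  unfolding wedges_at_eq tdeg_def by (rule n_subsets[OF finite_incident])

lemma finite_wedges_at: "tgraph_wf Sig G \<Longrightarrow> finite (wedges_at G v)"
  unfolding wedges_at_eq using finite_incident[of Sig G v] by auto

lemma pmf_vertex:
  assumes "tgraph_wf Sig G" "total_wedges G > 0"
  shows "pmf (vertex_pmf G) v = (if v \<in> tg_nodes G
      then real (tdeg G v choose 2) / real (total_wedges G) else 0)"
  unfolding vertex_pmf_def
proof (rule pmf_embed_pmf)
  show "(\<integral>\<^sup>+x. ennreal (if x \<in> tg_nodes G
      then real (tdeg G x choose 2) / real (total_wedges G) else 0) \<partial>count_space UNIV) = 1"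
  proof -
    have fin: "finite (tg_nodes G)" using assms(1) unfolding tgraph_wf_def by auto
    have "(\<integral>\<^sup>+x. ennreal (if x \<in> tg_nodes G
      then real (tdeg G x choose 2) / real (total_wedges G) else 0) \<partial>count_space UNIV)
      = (\<Sum>x\<in>tg_nodes G. ennreal (if x \<in> tg_nodes G
      then real (tdeg G x choose 2) / real (total_wedges G) else 0))"
      by (rule nn_integral_count_space'[OF fin]) auto
    also have "\<dots> = ennreal (\<Sum>x\<in>tg_nodes G. real (tdeg G x choose 2) / real (total_wedges G))"
      by (subst sum_ennreal[symmetric]) auto
    also have "(\<Sum>x\<in>tg_nodes G. real (tdeg G x choose 2) / real (total_wedges G)) = 1"
      using assms(2) by (simp add: sum_divide_distrib[symmetric] total_wedges_def of_nat_sum[symmetric] del: of_nat_sum)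
    finally show ?thesis by simp
  qed
qed auto

lemma pmf_sample_type:
  assumes wf: "tgraph_wf Sig G" and w: "total_wedges G > 0"
  shows "pmf (sample_type G) \<tau> = phi_TG G \<tau>"
proof -
  let ?W = "wedges_at G"
  let ?N = "tg_nodes G"
  have fin: "finite ?N" using wf unfolding tgraph_wf_def by auto
  define c where "c v = real (card {P \<in> ?W v. wtype G P = \<tau>})" for v
  have sample: "sample_type G = vertex_pmf G \<bind> (\<lambda>v. map_pmf (wtype G) (pmf_of_set (?W v)))"
    unfolding sample_type_def map_pmf_def by simp
  have inner: "pmf (vertex_pmf G) v * pmf (map_pmf (wtype G) (pmf_of_set (?W v))) \<tau>
     = (if v \<in> ?N then c v / real (total_wedges G) else 0)" for v
  proof (cases "v \<in> ?N \<and> ?W v \<noteq> {}")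
    case True
    have "pmf (map_pmf (wtype G) (pmf_of_set (?W v))) \<tau> = c v / real (card (?W v))"
      using True finite_wedges_at[OF wf, of v]
      by (simp add: pmf_map measure_pmf_of_set c_def Int_def vimage_def conj_commute)
    moreover have "tdeg G v choose 2 \<noteq> 0"
      using True card_wedges_at[OF wf, of v] finite_wedges_at[OF wf, of v]
      by (metis card_0_eq)
    ultimately show ?thesis using True card_wedges_at[OF wf, of v]
      by (simp add: pmf_vertex[OF wf w])
  next
    case False
    then consider "v \<notin> ?N" | "v \<in> ?N" "?W v = {}" by blast
    then show ?thesis
    proof cases
      case 1 then show ?thesis by (simp add: pmf_vertex[OF wf w])
    next
      case 2
      then have "tdeg G v choose 2 = 0" using card_wedges_at[OF wf, of v] by simp
      then show ?thesis using 2 by (simp add: pmf_vertex[OF wf w] c_def)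
    qed
  qed
  have "pmf (sample_type G) \<tau> = (\<Sum>v\<in>?N. pmf (vertex_pmf G) v * pmf (map_pmf (wtype G) (pmf_of_set (?W v))) \<tau>)"
    unfolding sample pmf_bind
    by (subst integral_measure_pmf[OF fin]) (auto simp: pmf_vertex[OF wf w] set_pmf_eq split: if_splits)
  also have "\<dots> = (\<Sum>v\<in>?N. c v) / real (total_wedges G)"
    by (simp add: inner sum_divide_distrib)
  also have "(\<Sum>v\<in>?N. c v) = real (type_count G \<tau>)"
  proof -
    have "{(v, P). v \<in> ?N \<and> P \<in> ?W v \<and> wtype G P = \<tau>} = (SIGMA v:?N. {P \<in> ?W v. wtype G P = \<tau>})"
      by auto
    then have "type_count G \<tau> = (\<Sum>v\<in>?N. card {P \<in> ?W v. wtype G P = \<tau>})"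
      unfolding type_count_def using fin finite_wedges_at[OF wf]
      by (simp add: card_SigmaI)
    then show ?thesis by (simp add: c_def)
  qed
  finally show ?thesis unfolding phi_TG_def .
qed



lemma map_pmf_eq_bernoulli: "map_pmf (\<lambda>x. x = a) M = bernoulli_pmf (pmf M a)"
proof (rule pmf_eqI)
  fix b :: bool
  have p: "0 \<le> pmf M a" "pmf M a \<le> 1" by (auto simp: pmf_le_1)
  show "pmf (map_pmf (\<lambda>x. x = a) M) b = pmf (bernoulli_pmf (pmf M a)) b"
  proof (cases b)
    case True
    have "(\<lambda>x. x = a) -` {True} = {a}" by auto
    then show ?thesis using True p by (simp add: pmf_map measure_pmf_single)
  next
    case False
    have "(\<lambda>x. x = a) -` {False} = UNIV - {a}" by auto
    moreover have "measure_pmf.prob M (UNIV - {a}) = 1 - measure_pmf.prob M {a}"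
      using measure_pmf.prob_compl[of "{a}" M] by simp
    ultimately show ?thesis using False p
      by (simp add: pmf_map measure_pmf_single)
  qed
qed

lemma binomial_count:
  "map_pmf (\<lambda>X. card {i \<in> {..<s}. X i = a}) (Pi_pmf {..<s} dflt (\<lambda>_. M))
     = binomial_pmf s (pmf M a)"
proof -
  have p: "pmf M a \<in> {0..1}" by (auto simp: pmf_le_1)
  have "binomial_pmf s (pmf M a) = map_pmf (\<lambda>f. card {x\<in>{..<s}. f x})
      (Pi_pmf {..<s} (dflt = a) (\<lambda>_. bernoulli_pmf (pmf M a)))"
    by (rule binomial_pmf_altdef') (use p in auto)
  also have "Pi_pmf {..<s} (dflt = a) (\<lambda>_. bernoulli_pmf (pmf M a))
     = Pi_pmf {..<s} (dflt = a) (\<lambda>_. map_pmf (\<lambda>x. x = a) M)"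
    by (simp add: map_pmf_eq_bernoulli)
  also have "\<dots> = map_pmf (\<lambda>h. (\<lambda>x. x = a) \<circ> h) (Pi_pmf {..<s} dflt (\<lambda>_. M))"
    by (rule Pi_pmf_map) auto
  finally show ?thesis by (simp add: pmf.map_comp o_def)
qed

lemma estimate_tail:
  assumes s: "s > 0" and e: "\<epsilon> \<ge> 0"
  shows "measure_pmf.prob (estimate_pmf G s)
     {\<phi>. \<bar>\<phi> a - pmf (sample_type G) a\<bar> \<ge> \<epsilon> \<or> \<phi> a < 0 \<or> \<phi> a > 1}
     \<le> 2 * exp (-2 * real s * \<epsilon>\<^sup>2)"
proof -
  let ?p = "pmf (sample_type G) a"
  let ?Pi = "Pi_pmf {..<s} undefined (\<lambda>_. sample_type G)"
  let ?F = "\<lambda>X \<tau>. real (card {i \<in> {..<s}. X i = \<tau>}) / real s"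
  let ?C = "\<lambda>X. card {i \<in> {..<s}. X i = a}"
  have le: "?C X \<le> s" for X
    using card_mono[of "{..<s}" "{i \<in> {..<s}. X i = a}"] by auto
  have "?F -` {\<phi>. \<bar>\<phi> a - ?p\<bar> \<ge> \<epsilon> \<or> \<phi> a < 0 \<or> \<phi> a > 1}
      = ?C -` {k. \<bar>real k / real s - ?p\<bar> \<ge> \<epsilon>}"
  proof (intro set_eqI iffI)
    fix X assume "X \<in> ?F -` {\<phi>. \<bar>\<phi> a - ?p\<bar> \<ge> \<epsilon> \<or> \<phi> a < 0 \<or> \<phi> a > 1}"
    moreover have "real (?C X) / real s \<le> 1" using le[of X] s by simp
    moreover have "real (?C X) / real s \<ge> 0" by simp
    ultimately show "X \<in> ?C -` {k. \<bar>real k / real s - ?p\<bar> \<ge> \<epsilon>}"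
      by (simp only: vimage_Collect_eq mem_Collect_eq) (elim disjE; linarith)
  qed auto
  then have "measure_pmf.prob (estimate_pmf G s)
     {\<phi>. \<bar>\<phi> a - ?p\<bar> \<ge> \<epsilon> \<or> \<phi> a < 0 \<or> \<phi> a > 1}
     = measure_pmf.prob (map_pmf ?C ?Pi) {k. \<bar>real k / real s - ?p\<bar> \<ge> \<epsilon>}"
    unfolding estimate_pmf_def by simp
  also have "map_pmf ?C ?Pi = binomial_pmf s ?p" by (rule binomial_count)
  also have "measure_pmf.prob (binomial_pmf s ?p) {k. \<bar>real k / real s - ?p\<bar> \<ge> \<epsilon>}
       \<le> 2 * exp (-2 * real s * \<epsilon>\<^sup>2)"
  proof -
    have "binomial_distribution ?p" by unfold_locales (auto simp: pmf_le_1)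
    from binomial_distribution.prob_abs_ge'[OF this s e] show ?thesis by simp
  qed
  finally show ?thesis .
qed



lemma prod_err:
  fixes a b c d e :: real
  assumes "0 \<le> a" "a \<le> 1" "0 \<le> d" "d \<le> 1" "\<bar>a - c\<bar> < e" "\<bar>b - d\<bar> < e"
  shows "\<bar>a * b - c * d\<bar> \<le> 2 * e"
proof -
  have eq: "a * b - c * d = a * (b - d) + (a - c) * d" by (simp add: algebra_simps)
  have 1: "\<bar>a * (b - d)\<bar> \<le> e"
  proof -
    have "\<bar>a * (b - d)\<bar> = a * \<bar>b - d\<bar>" using assms by (simp add: abs_mult)
    also have "\<dots> \<le> 1 * \<bar>b - d\<bar>" using assms by (intro mult_right_mono) auto
    finally show ?thesis using assms by simp
  qed
  have 2: "\<bar>(a - c) * d\<bar> \<le> e"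
  proof -
    have "\<bar>(a - c) * d\<bar> = \<bar>a - c\<bar> * d" using assms by (simp add: abs_mult)
    also have "\<dots> \<le> \<bar>a - c\<bar> * 1" using assms by (intro mult_left_mono) auto
    finally show ?thesis using assms by simp
  qed
  show ?thesis unfolding eq using 1 2 abs_triangle_ineq[of "a * (b - d)" "(a - c) * d"] by linarith
qed

lemma joint_marginal:
  assumes "finite GG" "G \<in> GG"
  shows "measure_pmf.prob (joint_estimate_pmf GG s) {\<Phi>. P (\<Phi> G)}
       = measure_pmf.prob (estimate_pmf G s) {\<phi>. P \<phi>}"
proof -
  have "measure_pmf.prob (joint_estimate_pmf GG s) {\<Phi>. P (\<Phi> G)}
      = measure_pmf.prob (map_pmf (\<lambda>\<Phi>. \<Phi> G) (joint_estimate_pmf GG s)) {\<phi>. P \<phi>}"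
    by (simp add: vimage_def)
  also have "map_pmf (\<lambda>\<Phi>. \<Phi> G) (joint_estimate_pmf GG s) = estimate_pmf G s"
    unfolding joint_estimate_pmf_def using assms by (simp add: Pi_pmf_component)
  finally show ?thesis .
qed

theorem theorem2:
  fixes GG :: "('v, 'l) tgraph set" and Sig :: "'l set"
    and lam delta :: real and s :: nat
  assumes "finite GG" and "finite Sig"
    and "\<forall>G \<in> GG. tgraph_wf Sig G \<and> total_wedges G > 0 \<and> distinct_times G"
    and "lam > 0" and "0 < delta" and "delta < 1"
    and "s = nat \<lceil>ln (2 * real (card GG) * real (num_types Sig) / delta)
                   / (2 * (lam / real (num_types Sig))^2)\<rceil>"
  shows "measure_pmf.prob (joint_estimate_pmf GG s)
           {Phi. \<forall>G1 \<in> GG. \<forall>G2 \<in> GG.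
              \<bar>k_TG Sig G1 G2 - inner_types Sig (Phi G1) (Phi G2)\<bar> \<le> 3 * lam}
         \<ge> 1 - delta"
proof -
  let ?J = "joint_estimate_pmf GG s"
  let ?T = "wedge_types Sig"
  let ?S = "{Phi. \<forall>G1 \<in> GG. \<forall>G2 \<in> GG.
              \<bar>k_TG Sig G1 G2 - inner_types Sig (Phi G1) (Phi G2)\<bar> \<le> 3 * lam}"
  define W where "W = num_types Sig"
  define n where "n = card GG"
  note fin = assms(1) and wf = assms(3) and lam = assms(4) and dl = assms(5,6)
  show ?thesis
  proof (cases "W = 0 \<or> GG = {}")
    case True
    have "?S = UNIV"
    proof (cases "GG = {}")
      case False
      then have "W = 0" using True by auto
      then have "?T = {} \<or> infinite ?T" unfolding W_def num_types_def by auto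
      then have "inner_types Sig x y = 0" for x y unfolding inner_types_def by auto
      then show ?thesis using lam unfolding k_TG_def by auto
    qed auto
    then show ?thesis using dl by simp
  next
    case False
    then have Wpos: "W > 0" and GGne: "GG \<noteq> {}" by auto
    have finT: "finite ?T" using Wpos unfolding W_def num_types_def using card_ge_0_finite by blast
    have npos: "n > 0" using GGne fin unfolding n_def by auto
    define e where "e = lam / W"
    have epos: "e > 0" using lam Wpos unfolding e_def by auto
    define L where "L = ln (2 * real n * real W / delta)"
    have "2 * real n * real W / delta > 1"
    proof -
      have "real n \<ge> 1" "real W \<ge> 1" using npos Wpos by auto
      then have "1 \<le> real n * real W" using mult_mono[of 1 "real n" 1 "real W"] by simp
      then have "2 * real n * real W \<ge> 2" by simp
      then show ?thesis using dl by (simp add: less_divide_eq)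
    qed
    then have Lpos: "L > 0" unfolding L_def by simp
    have s_eq: "s = nat \<lceil>L / (2 * e\<^sup>2)\<rceil>" using assms(7) unfolding L_def e_def n_def W_def .
    have s_ge: "real s \<ge> L / (2 * e\<^sup>2)" unfolding s_eq by linarith
    have spos: "s > 0"
    proof -
      have "L / (2 * e\<^sup>2) > 0" using Lpos epos by simp
      then show ?thesis using s_ge by linarith
    qed
    define q where "q = 2 * exp (-2 * real s * e\<^sup>2)"
    have q_le: "q \<le> delta / (real n * real W)"
    proof -
      have "2 * real s * e\<^sup>2 \<ge> L" using s_ge epos by (simp add: field_simps)
      then have "exp (-2 * real s * e\<^sup>2) \<le> exp (- L)" by simp
      also have "exp (- L) = delta / (2 * real n * real W)"
        unfolding L_def using dl npos Wpos by (simp add: exp_minus)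
      finally show ?thesis unfolding q_def using npos Wpos by (simp add: field_simps)
    qed
    define bad where "bad G \<tau> = {\<Phi>. \<bar>\<Phi> G \<tau> - phi_TG G \<tau>\<bar> \<ge> e \<or> \<Phi> G \<tau> < 0 \<or> \<Phi> G \<tau> > 1}"
      for G :: "('v, 'l) tgraph" and \<tau>
    have bad_le: "measure_pmf.prob ?J (bad G \<tau>) \<le> q" if "G \<in> GG" for G \<tau>
    proof -
      have ph: "phi_TG G \<tau> = pmf (sample_type G) \<tau>"
        using pmf_sample_type[of Sig G \<tau>] wf that by auto
      have "measure_pmf.prob ?J (bad G \<tau>) = measure_pmf.prob (estimate_pmf G s)
          {\<phi>. \<bar>\<phi> \<tau> - pmf (sample_type G) \<tau>\<bar> \<ge> e \<or> \<phi> \<tau> < 0 \<or> \<phi> \<tau> > 1}"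
        unfolding bad_def ph
        using joint_marginal[OF fin that, of s
            "\<lambda>\<phi>. \<bar>\<phi> \<tau> - pmf (sample_type G) \<tau>\<bar> \<ge> e \<or> \<phi> \<tau> < 0 \<or> \<phi> \<tau> > 1"] by simp
      also have "\<dots> \<le> q" unfolding q_def using estimate_tail[OF spos, of e G \<tau>] epos by simp
      finally show ?thesis .
    qed
    define B where "B = (\<Union>p\<in>GG \<times> ?T. bad (fst p) (snd p))"
    have "measure_pmf.prob ?J B \<le> (\<Sum>p\<in>GG \<times> ?T. measure_pmf.prob ?J (bad (fst p) (snd p)))"
      unfolding B_def by (rule measure_UNION_le) (use fin finT in auto)
    also have "\<dots> \<le> (\<Sum>p\<in>GG \<times> ?T. q)" by (intro sum_mono) (auto intro: bad_le)
    also have "\<dots> = real n * real W * q"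
      using fin finT by (simp add: card_cartesian_product n_def W_def num_types_def)
    also have "\<dots> \<le> delta" using q_le npos Wpos by (simp add: field_simps)
    finally have PB: "measure_pmf.prob ?J B \<le> delta" .
    have sub: "UNIV - B \<subseteq> ?S"
    proof
      fix \<Phi> assume "\<Phi> \<in> UNIV - B"
      then have good: "\<bar>\<Phi> G \<tau> - phi_TG G \<tau>\<bar> < e \<and> 0 \<le> \<Phi> G \<tau> \<and> \<Phi> G \<tau> \<le> 1"
        if "G \<in> GG" "\<tau> \<in> ?T" for G \<tau>
        using that unfolding B_def bad_def by force
      have phb: "0 \<le> phi_TG G \<tau> \<and> phi_TG G \<tau> \<le> 1" if "G \<in> GG" for G \<tau>
        using pmf_sample_type[of Sig G \<tau>] wf that pmf_le_1[of "sample_type G" \<tau>]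
          pmf_nonneg[of "sample_type G" \<tau>] by auto
      show "\<Phi> \<in> ?S"
      proof (intro CollectI ballI)
        fix G1 G2 assume g: "G1 \<in> GG" "G2 \<in> GG"
        have "\<bar>k_TG Sig G1 G2 - inner_types Sig (\<Phi> G1) (\<Phi> G2)\<bar>
            = \<bar>\<Sum>\<tau>\<in>?T. phi_TG G1 \<tau> * phi_TG G2 \<tau> - \<Phi> G1 \<tau> * \<Phi> G2 \<tau>\<bar>"
          unfolding k_TG_def inner_types_def by (simp add: sum_subtractf)
        also have "\<dots> \<le> (\<Sum>\<tau>\<in>?T. \<bar>phi_TG G1 \<tau> * phi_TG G2 \<tau> - \<Phi> G1 \<tau> * \<Phi> G2 \<tau>\<bar>)"
          by (rule sum_abs)
        also have "\<dots> \<le> (\<Sum>\<tau>\<in>?T. 2 * e)"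
        proof (intro sum_mono prod_err)
          fix \<tau> assume t: "\<tau> \<in> ?T"
          show "0 \<le> phi_TG G1 \<tau>" "phi_TG G1 \<tau> \<le> 1" using phb g by auto
          show "0 \<le> \<Phi> G2 \<tau>" "\<Phi> G2 \<tau> \<le> 1" using good g t by auto
          show "\<bar>phi_TG G1 \<tau> - \<Phi> G1 \<tau>\<bar> < e" using good[OF g(1) t] by (simp add: abs_minus_commute)
          show "\<bar>phi_TG G2 \<tau> - \<Phi> G2 \<tau>\<bar> < e" using good[OF g(2) t] by (simp add: abs_minus_commute)
        qed
        also have "\<dots> = 2 * lam" using Wpos unfolding e_def W_def num_types_def by simp
        also have "\<dots> \<le> 3 * lam" using lam by simp
        finally show "\<bar>k_TG Sig G1 G2 - inner_types Sig (\<Phi> G1) (\<Phi> G2)\<bar> \<le> 3 * lam" .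
      qed
    qed
    have "1 - delta \<le> 1 - measure_pmf.prob ?J B" using PB by simp
    also have "\<dots> = measure_pmf.prob ?J (UNIV - B)"
      using measure_pmf.prob_compl[of B ?J] by simp
    also have "\<dots> \<le> measure_pmf.prob ?J ?S"
      using sub by (intro measure_pmf.finite_measure_mono) auto
    finally show ?thesis .
  qed
qed

end
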